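(* Let $\Sigma=(B,\sigma)$ be a signed graph whose underlying graph $B$ is a block that is neither a single edge nor a circle, and suppose $[e,C,+]$ is a positive battery. Then every bridge $D$ of $C$ is balanced (contains no negative circle).
   Context: A signed graph $\Sigma=(G,\sigma)$ is a finite graph $G$ with signature $\sigma:E(G)\to\{+,-\}$. A circle is a connected 2-regular subgraph; its sign is the product of its edge signs. A subgraph is balanced if all its circles are positive. A block is a maximal subgraph without a cutpoint. For a circle $C$, a chord is an edge not in $C$ joining two distinct vertices of $C$; a bridge of $C$ is either a chord or a connected component $D$ of $G\setminus V(C)$ together with all edges joining $D$ to $C$. $[e,C,+]$ means $C$ is a positive circle containing $e$ and is the only positive circle containing $e$. *)

theory Defs
  imports Main
begin

text \<open>Finite (multi)graphs: vertex set V, edge set E, and an incidence map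
  ends assigning to each edge its set of one (loop) or two endpoints.\<close>

datatype sgn = Plus | Minus

definition graph :: "'v set \<Rightarrow> 'e set \<Rightarrow> ('e \<Rightarrow> 'v set) \<Rightarrow> bool" where
  "graph V E ends \<longleftrightarrow> finite V \<and> finite E \<and>
     (\<forall>e\<in>E. ends e \<subseteq> V \<and> (card (ends e) = 1 \<or> card (ends e) = 2))"

definition verts :: "('e \<Rightarrow> 'v set) \<Rightarrow> 'e set \<Rightarrow> 'v set" where
  "verts ends F = (\<Union>f\<in>F. ends f)"

definition adj :: "('e \<Rightarrow> 'v set) \<Rightarrow> 'e set \<Rightarrow> ('v \<times> 'v) set" where
  "adj ends F = {(u, w). \<exists>f\<in>F. u \<in> ends f \<and> w \<in> ends f}"

definition deg :: "('e \<Rightarrow> 'v set) \<Rightarrow> 'e set \<Rightarrow> 'v \<Rightarrow> nat" where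
  "deg ends F v = card {f\<in>F. v \<in> ends f \<and> card (ends f) = 2}
                 + 2 * card {f\<in>F. ends f = {v}}"

definition connected_on :: "('e \<Rightarrow> 'v set) \<Rightarrow> 'v set \<Rightarrow> 'e set \<Rightarrow> bool" where
  "connected_on ends W F \<longleftrightarrow> W \<noteq> {} \<and> (\<forall>u\<in>W. \<forall>w\<in>W. (u, w) \<in> (adj ends F)\<^sup>*)"

definition circle :: "'e set \<Rightarrow> ('e \<Rightarrow> 'v set) \<Rightarrow> 'e set \<Rightarrow> bool" where
  "circle E ends F \<longleftrightarrow> F \<subseteq> E \<and> F \<noteq> {} \<and> connected_on ends (verts ends F) F \<and>
     (\<forall>v\<in>verts ends F. deg ends F v = 2)"

text \<open>Sign of an edge set: product of the edge signs.\<close>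
definition positive :: "('e \<Rightarrow> sgn) \<Rightarrow> 'e set \<Rightarrow> bool" where
  "positive \<sigma> F \<longleftrightarrow> even (card {f\<in>F. \<sigma> f = Minus})"

definition balanced :: "'e set \<Rightarrow> ('e \<Rightarrow> 'v set) \<Rightarrow> ('e \<Rightarrow> sgn) \<Rightarrow> 'e set \<Rightarrow> bool" where
  "balanced E ends \<sigma> F \<longleftrightarrow> (\<forall>C. circle E ends C \<and> C \<subseteq> F \<longrightarrow> positive \<sigma> C)"

definition cutpoint :: "'e set \<Rightarrow> ('e \<Rightarrow> 'v set) \<Rightarrow> 'v \<Rightarrow> bool" where
  "cutpoint E ends v \<longleftrightarrow> (\<exists>E1 E2. E1 \<union> E2 = E \<and> E1 \<inter> E2 = {} \<and> E1 \<noteq> {} \<and> E2 \<noteq> {}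
      \<and> verts ends E1 \<inter> verts ends E2 = {v})"

definition is_block :: "'v set \<Rightarrow> 'e set \<Rightarrow> ('e \<Rightarrow> 'v set) \<Rightarrow> bool" where
  "is_block V E ends \<longleftrightarrow> connected_on ends V E \<and> (\<nexists>v. cutpoint E ends v)"

definition pos_battery :: "'e set \<Rightarrow> ('e \<Rightarrow> 'v set) \<Rightarrow> ('e \<Rightarrow> sgn) \<Rightarrow> 'e \<Rightarrow> 'e set \<Rightarrow> bool" where
  "pos_battery E ends \<sigma> e C \<longleftrightarrow> circle E ends C \<and> e \<in> C \<and> positive \<sigma> C \<and>
     (\<forall>C'. circle E ends C' \<and> e \<in> C' \<and> positive \<sigma> C' \<longrightarrow> C' = C)"

definition chord :: "'e set \<Rightarrow> ('e \<Rightarrow> 'v set) \<Rightarrow> 'e set \<Rightarrow> 'e \<Rightarrow> bool" where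
  "chord E ends C f \<longleftrightarrow> f \<in> E \<and> f \<notin> C \<and> card (ends f) = 2 \<and> ends f \<subseteq> verts ends C"

definition comps_minus :: "'v set \<Rightarrow> 'e set \<Rightarrow> ('e \<Rightarrow> 'v set) \<Rightarrow> 'e set \<Rightarrow> 'v set set" where
  "comps_minus V E ends C =
     (let X = V - verts ends C; FX = {f\<in>E. ends f \<subseteq> X}
      in {{y\<in>X. (x, y) \<in> (adj ends FX)\<^sup>*} | x. x \<in> X})"

definition bridge_of_comp :: "'e set \<Rightarrow> ('e \<Rightarrow> 'v set) \<Rightarrow> 'e set \<Rightarrow> 'v set \<Rightarrow> 'e set" where
  "bridge_of_comp E ends C D =
     {f\<in>E. ends f \<subseteq> D} \<union> {f\<in>E. ends f \<inter> D \<noteq> {} \<and> ends f \<inter> verts ends C \<noteq> {}}"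

definition bridges :: "'v set \<Rightarrow> 'e set \<Rightarrow> ('e \<Rightarrow> 'v set) \<Rightarrow> 'e set \<Rightarrow> 'e set set" where
  "bridges V E ends C =
     {{f} | f. chord E ends C f} \<union> (bridge_of_comp E ends C ` comps_minus V E ends C)"

end

theory Submission
  imports Defs
begin

lemma conn_split:
  assumes conn: "connected_on ends V E" and vE: "verts ends E \<subseteq> V" and ne: "\<forall>f\<in>E. ends f \<noteq> {}"
    and un: "E1 \<union> E2 = E" and n1: "E1 \<noteq> {}" and n2: "E2 \<noteq> {}"
  shows "verts ends E1 \<inter> verts ends E2 \<noteq> {}"
proof -
  obtain f1 where f1: "f1 \<in> E1" using n1 by blast
  obtain f2 where f2: "f2 \<in> E2" using n2 by blast
  obtain u where u: "u \<in> ends f1" using ne f1 un by blast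
  obtain w where w: "w \<in> ends f2" using ne f2 un by blast
  have uV: "u \<in> V" and wV: "w \<in> V" using u w f1 f2 un vE unfolding verts_def by blast+
  have "(u, w) \<in> (adj ends E)\<^sup>*" using conn uV wV unfolding connected_on_def by blast
  then have "w \<in> verts ends E1 \<or> verts ends E1 \<inter> verts ends E2 \<noteq> {}"
  proof (induction rule: rtrancl_induct)
    case base then show ?case using u f1 unfolding verts_def by blast
  next
    case (step y z)
    then obtain f where f: "f \<in> E" "y \<in> ends f" "z \<in> ends f" unfolding adj_def by blast
    show ?case
    proof (cases "f \<in> E1")
      case True then show ?thesis using f unfolding verts_def by blast
    next
      case False
      then have "f \<in> E2" using un f by blast
      then have "y \<in> verts ends E2" using f unfolding verts_def by blast
      then show ?thesis using step.IH by blast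
    qed
  qed
  moreover have "w \<in> verts ends E2" using w f2 unfolding verts_def by blast
  ultimately show ?thesis by blast
qed

locale lg =
  fixes E :: "'e set" and ends :: "'e \<Rightarrow> 'v set"
  assumes finE: "finite E" and two: "\<And>f. f \<in> E \<Longrightarrow> card (ends f) = 2"
begin

definition dg :: "'e set \<Rightarrow> 'v \<Rightarrow> nat" where
  "dg F v = card {f\<in>F. v \<in> ends f}"

definition evn :: "'e set \<Rightarrow> bool" where
  "evn F \<longleftrightarrow> (\<forall>v. even (dg F v))"

definition path :: "'e set \<Rightarrow> 'v list \<Rightarrow> 'e list \<Rightarrow> bool" where
  "path F vs es \<longleftrightarrow> distinct vs \<and> length vs = Suc (length es) \<and>
     (\<forall>i<length es. es!i \<in> F \<and> ends (es!i) = {vs!i, vs!Suc i})"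

lemma ends2: "f \<in> E \<Longrightarrow> x \<in> ends f \<Longrightarrow> \<exists>y. y \<noteq> x \<and> ends f = {x, y}"
  using two[of f] by (auto simp: card_2_iff)

lemma ends_ne: "f \<in> E \<Longrightarrow> ends f \<noteq> {}"
  using two[of f] by auto

lemma ends_fin: "f \<in> E \<Longrightarrow> finite (ends f)"
  using two[of f] by (simp add: card_ge_0_finite)

lemma deg_eq: "F \<subseteq> E \<Longrightarrow> deg ends F v = dg F v"
proof -
  assume F: "F \<subseteq> E"
  have h1: "{f\<in>F. ends f = {v}} = {}" using F two by fastforce
  have h2: "{f\<in>F. v \<in> ends f \<and> card (ends f) = 2} = {f\<in>F. v \<in> ends f}" using F two by blast
  show ?thesis unfolding deg_def dg_def h1 h2 by simp
qed

lemma adj_sym: "(x,y) \<in> adj ends F \<Longrightarrow> (y,x) \<in> adj ends F"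
  unfolding adj_def by blast

lemma adj_rtr_sym: "(x,y) \<in> (adj ends F)\<^sup>* \<Longrightarrow> (y,x) \<in> (adj ends F)\<^sup>*"
proof (induction rule: rtrancl_induct)
  case base then show ?case by simp
next
  case (step y z)
  then show ?case using adj_sym by (meson converse_rtrancl_into_rtrancl)
qed

lemma symdiff_parity:
  assumes "finite A" "finite B"
  shows "even (card {f\<in>(A-B)\<union>(B-A). P f}) \<longleftrightarrow> (even (card {f\<in>A. P f}) \<longleftrightarrow> even (card {f\<in>B. P f}))"
proof -
  let ?A = "{f\<in>A. P f}" and ?B = "{f\<in>B. P f}"
  have fa: "finite ?A" "finite ?B" using assms by auto
  have e1: "{f\<in>(A-B)\<union>(B-A). P f} = (?A - ?B) \<union> (?B - ?A)" by blast
  have c1: "card ((?A - ?B) \<union> (?B - ?A)) = card (?A - ?B) + card (?B - ?A)"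
    by (rule card_Un_disjoint) (use fa in auto)
  have c2: "card ?A = card (?A - ?B) + card (?A \<inter> ?B)"
    using fa card_Int_Diff[of ?A ?B] by (simp add: Int_commute)
  have c3: "card ?B = card (?B - ?A) + card (?A \<inter> ?B)"
    using fa card_Int_Diff[of ?B ?A] by (simp add: Int_commute)
  show ?thesis unfolding e1 c1 using c2 c3 by presburger
qed

lemma evn_symdiff: "finite A \<Longrightarrow> finite B \<Longrightarrow> evn A \<Longrightarrow> evn B \<Longrightarrow> evn ((A-B)\<union>(B-A))"
  unfolding evn_def dg_def
proof (intro allI impI)
  fix v assume "finite A" "finite B" "\<forall>v. even (card {f \<in> A. v \<in> ends f})" "\<forall>v. even (card {f \<in> B. v \<in> ends f})"
  then show "even (card {f \<in> (A-B)\<union>(B-A). v \<in> ends f})" using symdiff_parity[of A B "\<lambda>f. v \<in> ends f"] by simp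
qed

lemma circle_fin: "circle E ends K \<Longrightarrow> finite K"
  unfolding circle_def using finE by (auto intro: finite_subset)

lemma verts_fin: "F \<subseteq> E \<Longrightarrow> finite (verts ends F)"
proof -
  assume "F \<subseteq> E"
  then have "finite F" using finE finite_subset by blast
  then show ?thesis unfolding verts_def using \<open>F \<subseteq> E\<close> ends_fin by (intro finite_UN_I) auto
qed

lemma circle_evn: "circle E ends K \<Longrightarrow> evn K"
  unfolding evn_def
proof
  fix v assume K: "circle E ends K"
  show "even (dg K v)"
  proof (cases "v \<in> verts ends K")
    case True
    then show ?thesis using K deg_eq[of K v] unfolding circle_def by auto
  next
    case False
    then have h: "{f\<in>K. v \<in> ends f} = {}" unfolding verts_def by auto
    show ?thesis unfolding dg_def h by simp
  qed
qed

lemma path_len: "path F vs es \<Longrightarrow> length vs = Suc (length es)"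
  unfolding path_def by simp

lemma path_dist: "path F vs es \<Longrightarrow> distinct vs"
  unfolding path_def by simp

lemma path_edge: "path F vs es \<Longrightarrow> i < length es \<Longrightarrow> es!i \<in> F \<and> ends (es!i) = {vs!i, vs!Suc i}"
  unfolding path_def by simp

lemma path_edges: "path F vs es \<Longrightarrow> set es \<subseteq> F"
  by (auto simp: in_set_conv_nth dest: path_edge)

lemma path_single: "path F [v] []"
  unfolding path_def by simp

lemma path_Cons:
  assumes "path F vs es" "f \<in> F" "ends f = {w, hd vs}" "w \<notin> set vs"
  shows "path F (w#vs) (f#es)"
proof -
  have ne: "vs \<noteq> []" using path_len[OF assms(1)] by auto
  have "\<forall>i<length (f#es). (f#es)!i \<in> F \<and> ends ((f#es)!i) = {(w#vs)!i, (w#vs)!Suc i}"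
  proof (intro allI impI)
    fix i assume i: "i < length (f#es)"
    show "(f#es)!i \<in> F \<and> ends ((f#es)!i) = {(w#vs)!i, (w#vs)!Suc i}"
    proof (cases i)
      case 0 then show ?thesis using assms ne by (simp add: hd_conv_nth)
    next
      case (Suc j) then show ?thesis using i path_edge[OF assms(1), of j] by simp
    qed
  qed
  then show ?thesis using assms path_len[OF assms(1)] unfolding path_def by simp
qed

lemma path_drop:
  assumes "path F vs es" "j < length vs"
  shows "path F (drop j vs) (drop j es)"
  unfolding path_def
proof (intro conjI allI impI)
  show "distinct (drop j vs)" using assms path_dist by simp
  show "length (drop j vs) = Suc (length (drop j es))" using assms path_len[OF assms(1)] by simp
  fix i assume "i < length (drop j es)"
  then show "drop j es ! i \<in> F" "ends (drop j es ! i) = {drop j vs ! i, drop j vs ! Suc i}"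
    using path_edge[OF assms(1), of "j+i"] path_len[OF assms(1)] by auto
qed

lemma path_take:
  assumes "path F vs es" "j < length vs"
  shows "path F (take (Suc j) vs) (take j es)"
  unfolding path_def
proof (intro conjI allI impI)
  show "distinct (take (Suc j) vs)" using assms path_dist by simp
  show "length (take (Suc j) vs) = Suc (length (take j es))" using assms path_len[OF assms(1)] by simp
  fix i assume "i < length (take j es)"
  then show "take j es ! i \<in> F" "ends (take j es ! i) = {take (Suc j) vs ! i, take (Suc j) vs ! Suc i}"
    using path_edge[OF assms(1), of "i"] path_len[OF assms(1)] by auto
qed

lemma path_edist:
  assumes p: "path F vs es"
  shows "distinct es"
  unfolding distinct_conv_nth
proof (intro allI impI)
  fix i k assume ik: "i < length es" "k < length es" "i \<noteq> k"
  show "es!i \<noteq> es!k"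
  proof
    assume eq: "es!i = es!k"
    have L: "length vs = Suc (length es)" using path_len[OF p] .
    have d: "distinct vs" using path_dist[OF p] .
    have "vs!i \<in> ends (es!k)" using eq path_edge[OF p ik(1)] by simp
    then have "vs!i = vs!k \<or> vs!i = vs!Suc k" using path_edge[OF p ik(2)] by simp
    then have a: "i = Suc k" using d ik L by (auto simp: nth_eq_iff_index_eq)
    have "vs!k \<in> ends (es!i)" using eq path_edge[OF p ik(2)] by simp
    then have "vs!k = vs!i \<or> vs!k = vs!Suc i" using path_edge[OF p ik(1)] by simp
    then have b: "k = Suc i" using d ik L by (auto simp: nth_eq_iff_index_eq)
    show False using a b by simp
  qed
qed

lemma path_verts:
  assumes p: "path F vs es" and ne: "es \<noteq> []"
  shows "set vs \<subseteq> verts ends F"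
proof
  fix x assume "x \<in> set vs"
  then obtain i where i: "i < length vs" "x = vs!i" by (auto simp: in_set_conv_nth)
  have L: "length vs = Suc (length es)" using path_len[OF p] .
  show "x \<in> verts ends F"
  proof (cases "i < length es")
    case True
    then show ?thesis using path_edge[OF p True] i unfolding verts_def by auto
  next
    case False
    have "length es > 0" using ne by simp
    then have "i - 1 < length es" "Suc (i - 1) = i" using False i L by arith+
    then show ?thesis using path_edge[OF p, of "i - 1"] i unfolding verts_def by force
  qed
qed

lemma path_hd: "path F vs es \<Longrightarrow> hd vs = vs!0"
  using path_len by (metis hd_conv_nth list.size(3) nat.distinct(1))

lemma path_last: "path F vs es \<Longrightarrow> last vs = vs!(length es)"
  using path_len by (metis diff_Suc_1 last_conv_nth list.size(3) nat.distinct(1))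

lemma cycle_circle:
  assumes dv: "distinct vs" and de: "distinct es" and len: "length vs = length es"
    and n2: "2 \<le> length es" and sub: "set es \<subseteq> E"
    and ed: "\<forall>i<length es. ends (es!i) = {vs!i, vs!(if Suc i < length es then Suc i else 0)}"
  shows "circle E ends (set es)"
proof -
  define n where "n = length es"
  define nx where "nx i = (if Suc i < n then Suc i else 0)" for i
  have ed': "\<And>i. i<n \<Longrightarrow> ends (es!i) = {vs!i, vs!nx i}" using ed by (simp add: n_def nx_def)
  have nxlt: "\<And>i. i < n \<Longrightarrow> nx i < n" using n2 by (auto simp: nx_def n_def)
  have lv: "length vs = n" using len n_def by simp
  have vsV: "verts ends (set es) = set vs"
  proof
    show "verts ends (set es) \<subseteq> set vs"
    proof
      fix x assume "x \<in> verts ends (set es)"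
      then obtain f where f: "f \<in> set es" "x \<in> ends f" by (auto simp: verts_def)
      then obtain i where i: "i < n" "f = es!i" by (auto simp: in_set_conv_nth n_def)
      then have "x = vs!i \<or> x = vs!nx i" using ed' f by auto
      then show "x \<in> set vs" using i nxlt[OF i(1)] lv by auto
    qed
  next
    show "set vs \<subseteq> verts ends (set es)"
    proof
      fix x assume "x \<in> set vs"
      then obtain i where i: "i < n" "x = vs!i" using lv by (auto simp: in_set_conv_nth)
      then have "x \<in> ends (es!i)" using ed' by auto
      moreover have "es!i \<in> set es" using i n_def by simp
      ultimately show "x \<in> verts ends (set es)" unfolding verts_def by blast
    qed
  qed
  have dg2: "dg (set es) v = 2" if v: "v \<in> set vs" for v
  proof -
    obtain j where j: "j < n" "v = vs!j" using v lv by (auto simp: in_set_conv_nth)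
    define pj where "pj = (if j = 0 then n - 1 else j - 1)"
    have idx: "{i. i < n \<and> vs!j \<in> ends (es!i)} = {j, pj}"
    proof -
      have "\<And>i. i < n \<Longrightarrow> vs!j \<in> ends (es!i) \<longleftrightarrow> (i = j \<or> nx i = j)"
        using ed' nxlt j dv lv by (auto simp: nth_eq_iff_index_eq)
      then show ?thesis using j n2 unfolding pj_def nx_def n_def by (auto split: if_splits)
    qed
    have "{f\<in>set es. vs!j \<in> ends f} = (\<lambda>i. es!i) ` {i. i < n \<and> vs!j \<in> ends (es!i)}"
      by (auto simp: in_set_conv_nth n_def)
    then have "dg (set es) v = card ((\<lambda>i. es!i) ` {j, pj})" unfolding dg_def j(2) idx by simp
    also have "\<dots> = card {j, pj}"
      by (rule card_image, rule inj_on_nth[OF de]) (use j n2 in \<open>auto simp: pj_def n_def\<close>)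
    also have "\<dots> = 2" using n2 j by (auto simp: pj_def n_def)
    finally show ?thesis .
  qed
  have conn0: "\<And>i. i < n \<Longrightarrow> (vs!0, vs!i) \<in> (adj ends (set es))\<^sup>*"
  proof -
    fix i show "i < n \<Longrightarrow> (vs!0, vs!i) \<in> (adj ends (set es))\<^sup>*"
    proof (induction i)
      case 0 then show ?case by simp
    next
      case (Suc i)
      have "ends (es!i) = {vs!i, vs!Suc i}" using ed'[of i] Suc.prems by (simp add: nx_def)
      moreover have "es!i \<in> set es" using Suc.prems n_def by simp
      ultimately have "(vs!i, vs!Suc i) \<in> adj ends (set es)" unfolding adj_def by blast
      then show ?case using Suc by (meson Suc_lessD rtrancl.rtrancl_into_rtrancl)
    qed
  qed
  have conn: "connected_on ends (verts ends (set es)) (set es)"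
    unfolding connected_on_def vsV
  proof (intro conjI ballI)
    show "set vs \<noteq> {}" using lv n2 n_def by auto
    fix u w assume "u \<in> set vs" "w \<in> set vs"
    then obtain a b where "a < n" "u = vs!a" "b < n" "w = vs!b" using lv by (auto simp: in_set_conv_nth)
    then show "(u, w) \<in> (adj ends (set es))\<^sup>*" using conn0 adj_rtr_sym by (meson rtrancl_trans)
  qed
  show ?thesis unfolding circle_def
    using sub conn dg2 deg_eq[OF sub] vsV n2 by auto
qed

lemma two_paths_circle:
  assumes p1: "path F1 vs1 es1" and p2: "path F2 vs2 es2" and s1: "F1 \<subseteq> E" and s2: "F2 \<subseteq> E"
    and n1: "es1 \<noteq> []" and n2: "es2 \<noteq> []" and l1: "last vs1 = hd vs2" and l2: "last vs2 = hd vs1"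
    and dj: "set (butlast vs1) \<inter> set (butlast vs2) = {}" and dje: "set es1 \<inter> set es2 = {}"
  shows "circle E ends (set es1 \<union> set es2)"
proof -
  define k1 where "k1 = length es1"
  define k2 where "k2 = length es2"
  have L1: "length vs1 = Suc k1" using path_len[OF p1] k1_def by simp
  have L2: "length vs2 = Suc k2" using path_len[OF p2] k2_def by simp
  have k1p: "k1 > 0" using n1 k1_def by simp
  have k2p: "k2 > 0" using n2 k2_def by simp
  define vs where "vs = butlast vs1 @ butlast vs2"
  define es where "es = es1 @ es2"
  have lb1: "length (butlast vs1) = k1" using L1 by simp
  have lb2: "length (butlast vs2) = k2" using L2 by simp
  have lens: "length vs = length es" "length es = k1 + k2" using lb1 lb2 k1_def k2_def
    by (auto simp: vs_def es_def)
  have dv: "distinct vs" unfolding vs_def using path_dist[OF p1] path_dist[OF p2] dj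
    by (simp add: distinct_butlast)
  have de: "distinct es" unfolding es_def using path_edist[OF p1] path_edist[OF p2] dje by simp
  have sub: "set es \<subseteq> E" unfolding es_def using path_edges[OF p1] path_edges[OF p2] s1 s2 by auto
  have hv1: "hd vs1 = vs1!0" and hv2: "hd vs2 = vs2!0" using path_hd[OF p1] path_hd[OF p2] by auto
  have lv1: "last vs1 = vs1!k1" and lv2: "last vs2 = vs2!k2" using path_last[OF p1] path_last[OF p2] k1_def k2_def by auto
  have vsA: "\<And>i. i < k1 \<Longrightarrow> vs!i = vs1!i" unfolding vs_def using lb1 L1 by (simp add: nth_append nth_butlast)
  have vsB: "\<And>i. i < k2 \<Longrightarrow> vs!(k1+i) = vs2!i" unfolding vs_def using lb1 lb2 L2 by (simp add: nth_append nth_butlast)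
  have esA: "\<And>i. i < k1 \<Longrightarrow> es!i = es1!i" unfolding es_def using k1_def by (simp add: nth_append)
  have esB: "\<And>i. i < k2 \<Longrightarrow> es!(k1+i) = es2!i" unfolding es_def using k1_def by (simp add: nth_append)
  have ed: "\<forall>i<length es. ends (es!i) = {vs!i, vs!(if Suc i < length es then Suc i else 0)}"
  proof (intro allI impI)
    fix i assume i: "i < length es"
    show "ends (es!i) = {vs!i, vs!(if Suc i < length es then Suc i else 0)}"
    proof (cases "i < k1")
      case True
      have e1: "ends (es!i) = {vs1!i, vs1!Suc i}" using esA[OF True] path_edge[OF p1, of i] True k1_def by simp
      have "Suc i < length es" using True k2p lens by simp
      moreover have "vs!Suc i = vs1!Suc i"
      proof (cases "Suc i < k1")
        case True then show ?thesis using vsA by simp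
      next
        case False
        then have "Suc i = k1" using \<open>i < k1\<close> by simp
        then show ?thesis using vsB[of 0] k2p lv1 l1 hv2 by simp
      qed
      ultimately show ?thesis using e1 vsA[OF True] by simp
    next
      case False
      define j where "j = i - k1"
      have ij: "i = k1 + j" "j < k2" using False i lens j_def by auto
      have e2: "ends (es!i) = {vs2!j, vs2!Suc j}" using esB[OF ij(2)] path_edge[OF p2, of j] ij k2_def by simp
      show ?thesis
      proof (cases "Suc j < k2")
        case True
        then show ?thesis using e2 vsB[OF ij(2)] vsB[OF True] ij lens by simp
      next
        case False
        then have "Suc j = k2" using ij by simp
        moreover have "vs!0 = vs1!0" using vsA k1p by simp
        ultimately show ?thesis using e2 vsB[OF ij(2)] ij lens lv2 l2 hv1 by simp
      qed
    qed
  qed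
  have "circle E ends (set es)"
    by (rule cycle_circle[OF dv de lens(1) _ sub ed]) (use lens k1p k2p in simp)
  then show ?thesis unfolding es_def by simp
qed

lemma reach_path:
  assumes r: "(a,b) \<in> {(x,y). (x,y) \<in> adj ends F \<and> x \<notin> U}\<^sup>*" and FE: "F \<subseteq> E"
  shows "\<exists>vs es. path F vs es \<and> hd vs = a \<and> last vs = b \<and> (\<forall>v\<in>set (butlast vs). v \<notin> U)"
  using r
proof (induction rule: converse_rtrancl_induct)
  case base
  show ?case by (rule exI[of _ "[b]"], rule exI[of _ "[]"]) (simp add: path_single)
next
  case (step x x')
  then obtain vs es where P: "path F vs es" "hd vs = x'" "last vs = b" "\<forall>v\<in>set (butlast vs). v \<notin> U"
    by blast
  from step(1) obtain f where f: "f \<in> F" "x \<in> ends f" "x' \<in> ends f" and xU: "x \<notin> U"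
    unfolding adj_def by blast
  have ne: "vs \<noteq> []" using path_len[OF P(1)] by auto
  show ?case
  proof (cases "x \<in> set vs")
    case True
    then obtain j where j: "j < length vs" "vs!j = x" by (auto simp: in_set_conv_nth)
    have "path F (drop j vs) (drop j es)" using path_drop[OF P(1) j(1)] .
    moreover have "hd (drop j vs) = x" using j by (simp add: hd_drop_conv_nth)
    moreover have "last (drop j vs) = b" using j P(3) by simp
    moreover have "\<forall>v\<in>set (butlast (drop j vs)). v \<notin> U"
      using P(4) by (metis butlast_drop in_set_dropD)
    ultimately show ?thesis by blast
  next
    case False
    have "x' \<in> set vs" using P(2) ne by auto
    then have xx: "x \<noteq> x'" using False by auto
    obtain y where "y \<noteq> x" "ends f = {x, y}" using ends2 f FE by blast
    then have ef: "ends f = {x, hd vs}" using f(3) xx P(2) by auto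
    have "path F (x#vs) (f#es)" by (rule path_Cons[OF P(1) f(1) ef False])
    moreover have "\<forall>v\<in>set (butlast (x#vs)). v \<notin> U" using P(4) ne xU by simp
    ultimately show ?thesis using P(3) ne by (intro exI[of _ "x#vs"] exI[of _ "f#es"]) simp
  qed
qed

lemma conn_path:
  assumes "(a,b) \<in> (adj ends F)\<^sup>*" "F \<subseteq> E"
  shows "\<exists>vs es. path F vs es \<and> hd vs = a \<and> last vs = b"
proof -
  have "{(x,y). (x,y) \<in> adj ends F \<and> x \<notin> {}} = adj ends F" by auto
  then show ?thesis using reach_path[of a b F "{}"] assms by auto
qed

lemma two_elems: "finite A \<Longrightarrow> 2 \<le> card A \<Longrightarrow> x \<in> A \<Longrightarrow> \<exists>y\<in>A. y \<noteq> x"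
proof -
  assume a: "finite A" "2 \<le> card A" "x \<in> A"
  have "card (A - {x}) = card A - 1" using a by (simp add: card_Diff_singleton)
  then have "card (A - {x}) > 0" using a by simp
  then have "A - {x} \<noteq> {}" using card_gt_0_iff by blast
  then show ?thesis by auto
qed

lemma mindeg_circle:
  assumes SE: "S \<subseteq> E" and ne: "S \<noteq> {}" and md: "\<forall>v \<in> verts ends S. dg S v \<ge> 2"
  shows "\<exists>Y. circle E ends Y \<and> Y \<subseteq> S"
proof -
  define P where "P k = (\<exists>vs es. path S vs es \<and> set vs \<subseteq> verts ends S \<and> length vs = k)" for k
  obtain f0 where f0: "f0 \<in> S" using ne by blast
  obtain v0 where v0: "v0 \<in> ends f0" using ends_ne f0 SE by blast
  have "v0 \<in> verts ends S" using f0 v0 unfolding verts_def by blast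
  then have P1: "P 1" unfolding P_def by (intro exI[of _ "[v0]"] exI[of _ "[]"]) (simp add: path_single)
  have fv: "finite (verts ends S)" using verts_fin[OF SE] .
  have bnd: "\<forall>k. P k \<longrightarrow> k \<le> card (verts ends S)"
  proof (intro allI impI)
    fix k assume "P k"
    then obtain vs es where "path S vs es" "set vs \<subseteq> verts ends S" "length vs = k" unfolding P_def by blast
    then have "length vs = card (set vs)" by (simp add: distinct_card path_dist)
    then show "k \<le> card (verts ends S)" using card_mono[OF fv \<open>set vs \<subseteq> verts ends S\<close>] \<open>length vs = k\<close> by simp
  qed
  obtain k where Pk: "P k" and kmax: "\<forall>y. P y \<longrightarrow> y \<le> k" using Nat.ex_has_greatest_nat[OF P1 bnd] by blast
  obtain vs es where p: "path S vs es" and sv: "set vs \<subseteq> verts ends S" and lk: "length vs = k"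
    using Pk unfolding P_def by blast
  have L: "length vs = Suc (length es)" using path_len[OF p] .
  define v where "v = vs!0"
  have vin: "v \<in> verts ends S" using sv L unfolding v_def by auto
  have fd: "finite {g\<in>S. v \<in> ends g}" using SE finE by (auto intro: finite_subset)
  obtain g where g: "g \<in> S" "v \<in> ends g" and gne: "es \<noteq> [] \<longrightarrow> g \<noteq> es!0"
  proof (cases "es = []")
    case True
    have "dg S v \<ge> 2" using md vin by simp
    then have "{g\<in>S. v \<in> ends g} \<noteq> {}" unfolding dg_def by (metis card.empty not_numeral_le_zero)
    then show ?thesis using that True by blast
  next
    case False
    have "es!0 \<in> S" "v \<in> ends (es!0)" using path_edge[OF p, of 0] False v_def by auto
    moreover have "2 \<le> card {g\<in>S. v \<in> ends g}" using md vin by (simp add: dg_def)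
    ultimately obtain y where "y \<in> {g\<in>S. v \<in> ends g}" "y \<noteq> es!0"
      using two_elems[OF fd] by blast
    then show ?thesis using that by blast
  qed
  obtain w where w: "w \<noteq> v" "ends g = {v, w}" using ends2 g SE by blast
  have hdv: "hd vs = v" using path_hd[OF p] v_def by simp
  show ?thesis
  proof (cases "w \<in> set vs")
    case False
    have "path S (w#vs) (g#es)" by (rule path_Cons[OF p g(1) _ False]) (use w hdv in auto)
    moreover have "set (w#vs) \<subseteq> verts ends S" using sv w g unfolding verts_def by auto
    ultimately have "P (Suc k)" unfolding P_def using lk by (intro exI) auto
    then show ?thesis using kmax by auto
  next
    case True
    then obtain j where j: "j < length vs" "vs!j = w" by (auto simp: in_set_conv_nth)
    have j0: "j \<noteq> 0" using j w v_def by (metis)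
    have jes: "j \<le> length es" using j L by simp
    have esne: "es \<noteq> []" using j0 jes by auto
    have p1: "path S (take (Suc j) vs) (take j es)" using path_take[OF p j(1)] .
    have p2: "path S [w, v] [g]"
      by (rule path_Cons[OF path_single g(1)]) (use w in auto)
    have n1: "take j es \<noteq> []" using j0 esne by simp
    have l1: "last (take (Suc j) vs) = hd [w, v]" using j by (simp add: take_Suc_conv_app_nth)
    have l2: "last [w, v] = hd (take (Suc j) vs)" using hdv L by (simp add: hd_conv_nth v_def)
    have bt: "butlast (take (Suc j) vs) = take j vs" using j by (simp add: take_Suc_conv_app_nth)
    have wn: "w \<notin> set (take j vs)"
    proof
      assume "w \<in> set (take j vs)"
      then obtain i where "i < j" "vs!i = w" using j by (auto simp: in_set_conv_nth)
      then show False using j path_dist[OF p] nth_eq_iff_index_eq[of vs i j] by simp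
    qed
    have dj: "set (butlast (take (Suc j) vs)) \<inter> set (butlast [w, v]) = {}" using bt wn by simp
    have gn: "g \<notin> set (take j es)"
    proof
      assume "g \<in> set (take j es)"
      then obtain i where i: "i < j" "es!i = g" using jes by (auto simp: in_set_conv_nth)
      show False
      proof (cases "i = 0")
        case True then show False using gne esne i by simp
      next
        case False
        have "i < length es" using i jes by simp
        then have "v = vs!i \<or> v = vs!Suc i" using path_edge[OF p] i g(2) by auto
        then show False using False L \<open>i < length es\<close> path_dist[OF p] v_def
          by (auto simp: nth_eq_iff_index_eq)
      qed
    qed
    have dje: "set (take j es) \<inter> set [g] = {}" using gn by simp
    have "circle E ends (set (take j es) \<union> set [g])"
      by (rule two_paths_circle[OF p1 p2 SE SE n1 _ l1 l2 dj dje]) simp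
    moreover have "set (take j es) \<union> set [g] \<subseteq> S" using path_edges[OF p] g(1) by (auto dest: in_set_takeD)
    ultimately show ?thesis by blast
  qed
qed

lemma evn_circle_through:
  assumes "finite S" "S \<subseteq> E" "evn S" "e \<in> S"
  shows "\<exists>W. circle E ends W \<and> W \<subseteq> S \<and> e \<in> W"
  using assms
proof (induction "card S" arbitrary: S rule: less_induct)
  case less
  have md: "\<forall>v \<in> verts ends S. dg S v \<ge> 2"
  proof
    fix v assume "v \<in> verts ends S"
    then obtain f where "f \<in> S" "v \<in> ends f" unfolding verts_def by blast
    then have "{f\<in>S. v \<in> ends f} \<noteq> {}" by blast
    then have "dg S v \<noteq> 0" unfolding dg_def using less.prems(1) by simp
    moreover have "even (dg S v)" using less.prems(3) unfolding evn_def by blast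
    ultimately obtain k where "dg S v = 2 * k" "k \<noteq> 0" by (metis evenE mult_0_right)
    then show "dg S v \<ge> 2" by simp
  qed
  obtain Y where Y: "circle E ends Y" "Y \<subseteq> S" using mindeg_circle[OF less.prems(2) _ md] less.prems(4) by blast
  show ?case
  proof (cases "e \<in> Y")
    case True then show ?thesis using Y by blast
  next
    case False
    have fY: "finite Y" using circle_fin[OF Y(1)] .
    have Yne: "Y \<noteq> {}" using Y(1) unfolding circle_def by blast
    have eq: "S - Y = (S - Y) \<union> (Y - S)" using Y(2) by blast
    have ev: "evn (S - Y)" using evn_symdiff[OF less.prems(1) fY less.prems(3) circle_evn[OF Y(1)]] eq by simp
    have "card (S - Y) < card S" using Y(2) Yne less.prems(1) by (metis Diff_empty Diff_subset Int_absorb1 card_Diff_subset_Int psubsetI psubset_card_mono Diff_eq_empty_iff Diff_Diff_Int)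
    then obtain W where "circle E ends W" "W \<subseteq> S - Y" "e \<in> W"
      using less.hyps[of "S - Y"] less.prems ev False by blast
    then show ?thesis by blast
  qed
qed

lemma subcircle:
  assumes K: "circle E ends K" and Z: "circle E ends Z" and sub: "K \<subseteq> Z"
  shows "K = Z"
proof -
  have ZE: "Z \<subseteq> E" and KE: "K \<subseteq> E" using K Z unfolding circle_def by auto
  have fZ: "finite Z" using circle_fin[OF Z] .
  have loc: "\<And>v f. v \<in> verts ends K \<Longrightarrow> f \<in> Z \<Longrightarrow> v \<in> ends f \<Longrightarrow> f \<in> K"
  proof -
    fix v f assume v: "v \<in> verts ends K" and f: "f \<in> Z" "v \<in> ends f"
    have vZ: "v \<in> verts ends Z" using v sub unfolding verts_def by blast
    have "dg K v = 2" using K v deg_eq[OF KE] unfolding circle_def by auto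
    moreover have "dg Z v = 2" using Z vZ deg_eq[OF ZE] unfolding circle_def by auto
    ultimately have "card {f\<in>K. v \<in> ends f} = card {f\<in>Z. v \<in> ends f}" unfolding dg_def by simp
    moreover have "{f\<in>K. v \<in> ends f} \<subseteq> {f\<in>Z. v \<in> ends f}" using sub by blast
    moreover have "finite {f\<in>Z. v \<in> ends f}" using fZ by simp
    ultimately have "{f\<in>K. v \<in> ends f} = {f\<in>Z. v \<in> ends f}" using card_subset_eq by blast
    then show "f \<in> K" using f by blast
  qed
  obtain u where u: "u \<in> verts ends K" using K unfolding circle_def connected_on_def by blast
  have uZ: "u \<in> verts ends Z" using u sub unfolding verts_def by blast
  have vv: "verts ends Z \<subseteq> verts ends K"
  proof
    fix z assume z: "z \<in> verts ends Z"
    have "(u, z) \<in> (adj ends Z)\<^sup>*" using Z uZ z unfolding circle_def connected_on_def by blast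
    then show "z \<in> verts ends K"
    proof (induction rule: rtrancl_induct)
      case base then show ?case using u .
    next
      case (step y z)
      then obtain f where "f \<in> Z" "y \<in> ends f" "z \<in> ends f" unfolding adj_def by blast
      then have "f \<in> K" using loc step.IH by blast
      then show ?case using \<open>z \<in> ends f\<close> unfolding verts_def by blast
    qed
  qed
  have "Z \<subseteq> K"
  proof
    fix f assume f: "f \<in> Z"
    obtain v where v: "v \<in> ends f" using ends_ne f ZE by blast
    then have "v \<in> verts ends K" using vv f unfolding verts_def by blast
    then show "f \<in> K" using loc f v by blast
  qed
  then show ?thesis using sub by blast
qed

lemma theta:
  assumes K: "circle E ends K" and eK: "e \<notin> K" and Z: "circle E ends Z" and eZ: "e \<in> Z"
    and ZK: "Z \<inter> K \<noteq> {}"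
  shows "\<exists>W1 W2. circle E ends W1 \<and> circle E ends W2 \<and> e \<in> W1 \<and> e \<in> W2 \<and> (W1 - W2) \<union> (W2 - W1) = K"
  using Z eZ ZK
proof (induction "card (Z \<union> K)" arbitrary: Z rule: less_induct)
  case less
  have fZ: "finite Z" and fK: "finite K" using circle_fin less.prems(1) K by auto
  have ZE: "Z \<subseteq> E" and KE: "K \<subseteq> E" using less.prems(1) K unfolding circle_def by auto
  define S where "S = (Z - K) \<union> (K - Z)"
  have fS: "finite S" using fZ fK S_def by simp
  have SE: "S \<subseteq> E" using ZE KE S_def by blast
  have evS: "evn S" unfolding S_def by (rule evn_symdiff[OF fZ fK circle_evn[OF less.prems(1)] circle_evn[OF K]])
  have eS: "e \<in> S" using less.prems(2) eK S_def by blast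
  obtain W where W: "circle E ends W" "W \<subseteq> S" "e \<in> W" using evn_circle_through[OF fS SE evS eS] by blast
  show ?case
  proof (cases "W = S")
    case True
    have "(Z - W) \<union> (W - Z) = K" using True S_def by blast
    then show ?thesis using less.prems(1,2) W by blast
  next
    case False
    have WK: "W \<inter> K \<noteq> {}"
    proof
      assume a: "W \<inter> K = {}"
      then have "W \<subseteq> Z" using W(2) S_def by blast
      then have "W = Z" using subcircle[OF W(1) less.prems(1)] by blast
      then show False using less.prems(3) W(2) S_def by blast
    qed
    have fW: "finite W" using circle_fin[OF W(1)] .
    have sub: "W \<union> K \<subseteq> Z \<union> K" using W(2) S_def by blast
    have neq: "W \<union> K \<noteq> Z \<union> K"
    proof
      assume eq: "W \<union> K = Z \<union> K"
      define T where "T = S - W"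
      have TK: "T \<subseteq> K - Z" using eq T_def S_def by blast
      obtain t where t: "t \<in> T" using False W(2) T_def by blast
      have fT: "finite T" using fS T_def by simp
      have TE: "T \<subseteq> E" using SE T_def by blast
      have "T = (S - W) \<union> (W - S)" using W(2) T_def by blast
      then have evT: "evn T" using evn_symdiff[OF fS fW evS circle_evn[OF W(1)]] by simp
      obtain Y where Y: "circle E ends Y" "Y \<subseteq> T" "t \<in> Y" using evn_circle_through[OF fT TE evT t] by blast
      have "Y = K" using subcircle[OF Y(1) K] Y(2) TK by blast
      then show False using TK Y(2) less.prems(3) by blast
    qed
    have "card (W \<union> K) < card (Z \<union> K)"
      using sub neq fZ fK by (intro psubset_card_mono) auto
    then show ?thesis using less.hyps[OF _ W(1) W(3) WK] by blast
  qed
qed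

lemma trans_circ:
  assumes Z1: "circle E ends Z1" "a \<in> Z1" "g \<in> Z1" and K: "circle E ends K" "g \<in> K" "h \<in> K"
  shows "\<exists>W. circle E ends W \<and> a \<in> W \<and> h \<in> W"
proof (cases "a \<in> K")
  case True then show ?thesis using K by blast
next
  case False
  have "Z1 \<inter> K \<noteq> {}" using Z1 K by blast
  then obtain W1 W2 where W: "circle E ends W1" "circle E ends W2" "a \<in> W1" "a \<in> W2" "(W1 - W2) \<union> (W2 - W1) = K"
    using theta[OF K(1) False Z1(1) Z1(2)] by blast
  then have "h \<in> W1 \<or> h \<in> W2" using K(3) by blast
  then show ?thesis using W by blast
qed

lemma last_notin_butlast: "distinct xs \<Longrightarrow> xs \<noteq> [] \<Longrightarrow> last xs \<notin> set (butlast xs)"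
  by (metis append_butlast_last_id distinct_append disjoint_iff list.set_intros(1))

lemma all_on_circle:
  assumes conn: "connected_on ends V E" and vE: "verts ends E \<subseteq> V"
    and nocut: "\<And>v. \<not> cutpoint E ends v"
    and C: "circle E ends C" and eC: "e \<in> C" and fE: "f \<in> E"
  shows "\<exists>Z. circle E ends Z \<and> e \<in> Z \<and> f \<in> Z"
proof (rule ccontr)
  assume nf: "\<not> (\<exists>Z. circle E ends Z \<and> e \<in> Z \<and> f \<in> Z)"
  define F where "F = {g\<in>E. \<exists>Z. circle E ends Z \<and> e \<in> Z \<and> g \<in> Z}"
  have Fcl: "Z \<subseteq> F" if Z: "circle E ends Z" and ZF: "Z \<inter> F \<noteq> {}" for Z
  proof
    fix z assume z: "z \<in> Z"
    obtain g where g: "g \<in> Z" "g \<in> F" using ZF by blast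
    then obtain Zg where Zg: "circle E ends Zg" "e \<in> Zg" "g \<in> Zg" unfolding F_def by blast
    obtain W where "circle E ends W" "e \<in> W" "z \<in> W" using trans_circ[OF Zg Z g(1) z] by blast
    moreover have "z \<in> E" using Z z unfolding circle_def by blast
    ultimately show "z \<in> F" unfolding F_def by blast
  qed
  have CF: "C \<subseteq> F" using C eC unfolding F_def circle_def by blast
  have FE: "F \<subseteq> E" unfolding F_def by blast
  have Fne: "F \<noteq> {}" using CF eC by blast
  have fnF: "f \<notin> F" using nf unfolding F_def by blast
  define U where "U = verts ends F"
  have ne: "\<forall>g\<in>E. ends g \<noteq> {}" using ends_ne by blast
  obtain p where pU: "p \<in> U" and pE: "p \<in> verts ends (E - F)"
    using conn_split[OF conn vE ne, of F "E - F"] FE Fne fnF fE U_def by blast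
  obtain f0 where f0: "f0 \<in> E - F" "p \<in> ends f0" using pE unfolding verts_def by blast
  obtain x0 where x0: "x0 \<noteq> p" "ends f0 = {p, x0}" using ends2 f0 by blast
  have FendsU: "\<And>g. g \<in> F \<Longrightarrow> ends g \<subseteq> U" unfolding U_def verts_def by blast
  have EFE: "E - F \<subseteq> E" by blast
  obtain q rvs res where q: "q \<in> U" "q \<noteq> p" and R: "path (E - F) rvs res" "hd rvs = p" "last rvs = q"
      "res \<noteq> []" "\<forall>v\<in>set (butlast rvs). v = p \<or> v \<notin> U"
  proof (cases "x0 \<in> U")
    case True
    have "path (E - F) [p, x0] [f0]" by (rule path_Cons[OF path_single f0(1)]) (use x0 in auto)
    moreover have "\<forall>v\<in>set (butlast [p, x0]). v = p \<or> v \<notin> U" by simp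
    ultimately show ?thesis using that[of x0 "[p, x0]" "[f0]"] True x0 by auto
  next
    case False
    define Rel where "Rel = {(x,y). (x,y) \<in> adj ends (E - F) \<and> x \<notin> U}"
    show ?thesis
    proof (cases "\<exists>q. (x0, q) \<in> Rel\<^sup>* \<and> q \<in> U \<and> q \<noteq> p")
      case True
      then obtain q where q: "(x0, q) \<in> Rel\<^sup>*" "q \<in> U" "q \<noteq> p" by blast
      obtain vs es where P: "path (E - F) vs es" "hd vs = x0" "last vs = q" "\<forall>v\<in>set (butlast vs). v \<notin> U"
        using reach_path[OF q(1)[unfolded Rel_def] EFE] by blast
      have vne: "vs \<noteq> []" using path_len[OF P(1)] by auto
      have "set vs = set (butlast vs @ [last vs])" by (simp only: append_butlast_last_id[OF vne])
      then have "set vs = set (butlast vs) \<union> {last vs}" by simp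
      then have pn: "p \<notin> set vs" using P(3,4) pU q(3) by blast
      have "path (E - F) (p#vs) (f0#es)" by (rule path_Cons[OF P(1) f0(1) _ pn]) (use x0 P(2) in simp)
      moreover have "\<forall>v\<in>set (butlast (p#vs)). v = p \<or> v \<notin> U" using P(4) vne by simp
      moreover have "last (p#vs) = q" using P(3) vne by simp
      ultimately show ?thesis using that[of q "p#vs" "f0#es"] q by auto
    next
      case False2: False
      define Y where "Y = {x. (x0, x) \<in> Rel\<^sup>* \<and> x \<notin> U}"
      define E1 where "E1 = {g\<in>E. ends g \<inter> Y \<noteq> {}}"
      define E2 where "E2 = E - E1"
      have x0Y: "x0 \<in> Y" using False unfolding Y_def by simp
      have f0E1: "f0 \<in> E1" unfolding E1_def using f0 x0 x0Y by auto
      have E1n: "E1 \<noteq> {}" using f0E1 by auto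
      have FE2: "F \<subseteq> E2"
      proof
        fix g assume g: "g \<in> F"
        have "ends g \<subseteq> U" using FendsU[OF g] .
        then have "ends g \<inter> Y = {}" unfolding Y_def by auto
        then show "g \<in> E2" using g FE unfolding E1_def E2_def by auto
      qed
      have E2n: "E2 \<noteq> {}" using FE2 Fne by auto
      have pE1: "p \<in> verts ends E1" using f0E1 f0(2) unfolding verts_def by auto
      have pE2: "p \<in> verts ends E2" using pU FE2 unfolding U_def verts_def by auto
      have sub1: "verts ends E1 \<inter> verts ends E2 \<subseteq> {p}"
      proof
        fix v assume v: "v \<in> verts ends E1 \<inter> verts ends E2"
        then obtain g where g: "g \<in> E1" "v \<in> ends g" unfolding verts_def by auto
        obtain g2 where g2: "g2 \<in> E2" "v \<in> ends g2" using v unfolding verts_def by auto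
        have vY: "v \<notin> Y" using g2 unfolding E1_def E2_def by auto
        obtain x where x: "x \<in> ends g" "x \<in> Y" using g unfolding E1_def by auto
        have gF: "g \<notin> F" using FE2 g unfolding E2_def by auto
        have gE: "g \<in> E" using g unfolding E1_def by auto
        have xU: "x \<notin> U" using x(2) unfolding Y_def by auto
        have "(x, v) \<in> adj ends (E - F)" unfolding adj_def using x(1) g(2) gE gF by auto
        then have xv: "(x, v) \<in> Rel" unfolding Rel_def using xU by auto
        have "(x0, x) \<in> Rel\<^sup>*" using x(2) unfolding Y_def by auto
        then have r: "(x0, v) \<in> Rel\<^sup>*" using xv by (rule rtrancl.rtrancl_into_rtrancl)
        then have "v \<in> U" using vY unfolding Y_def by auto
        then show "v \<in> {p}" using False2 r by auto
      qed
      have "verts ends E1 \<inter> verts ends E2 = {p}" using sub1 pE1 pE2 by auto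
      moreover have "E1 \<union> E2 = E" "E1 \<inter> E2 = {}" unfolding E1_def E2_def by auto
      ultimately have "cutpoint E ends p" unfolding cutpoint_def using E1n E2n by blast
      then show ?thesis using nocut by blast
    qed
  qed
  obtain fp where fp: "fp \<in> F" "p \<in> ends fp" using pU U_def unfolding verts_def by blast
  obtain fq where fq: "fq \<in> F" "q \<in> ends fq" using q U_def unfolding verts_def by blast
  obtain Zp where Zp: "circle E ends Zp" "e \<in> Zp" "fp \<in> Zp" using fp F_def by blast
  obtain Zq where Zq: "circle E ends Zq" "e \<in> Zq" "fq \<in> Zq" using fq F_def by blast
  obtain Z where Z: "circle E ends Z" "fp \<in> Z" "fq \<in> Z"
    using trans_circ[OF Zp(1) Zp(3) Zp(2) Zq] by blast
  have ZF: "Z \<subseteq> F" using Fcl[OF Z(1)] Z(2) fp(1) by blast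
  have ZE: "Z \<subseteq> E" using Z(1) unfolding circle_def by blast
  have pZ: "p \<in> verts ends Z" and qZ: "q \<in> verts ends Z" using Z fp fq unfolding verts_def by blast+
  have "(q, p) \<in> (adj ends Z)\<^sup>*" using Z(1) pZ qZ unfolding circle_def connected_on_def by blast
  then obtain avs aes where A: "path Z avs aes" "hd avs = q" "last avs = p" using conn_path ZE by blast
  have ane: "aes \<noteq> []"
  proof
    assume "aes = []"
    then have "avs = [hd avs]" using path_len[OF A(1)] by (cases avs) auto
    then have "hd avs = last avs" by (metis last_ConsL list.sel(1))
    then show False using A q(2) by simp
  qed
  have avU: "set avs \<subseteq> U" using path_verts[OF A(1) ane] ZF unfolding U_def verts_def by blast
  have avne: "avs \<noteq> []" using path_len[OF A(1)] by auto
  have pnA: "p \<notin> set (butlast avs)" using last_notin_butlast[OF path_dist[OF A(1)] avne] A(3) by simp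
  have dj: "set (butlast rvs) \<inter> set (butlast avs) = {}"
  proof -
    have "set (butlast avs) \<subseteq> U" using avU by (meson in_set_butlastD subset_iff)
    then show ?thesis using R(5) pnA by auto
  qed
  have dje: "set res \<inter> set aes = {}" using path_edges[OF R(1)] path_edges[OF A(1)] ZF by blast
  have Yc: "circle E ends (set res \<union> set aes)"
    by (rule two_paths_circle[OF R(1) A(1) EFE ZE R(4) ane]) (use R A dj dje in auto)
  have "(set res \<union> set aes) \<inter> F \<noteq> {}" using ane path_edges[OF A(1)] ZF by (cases aes) auto
  then have "set res \<union> set aes \<subseteq> F" using Fcl[OF Yc] by blast
  moreover have "set res \<subseteq> E - F" using path_edges[OF R(1)] .
  ultimately show False using R(4) by (cases res) auto
qed

lemma close_lem:
  assumes "circle E ends C" "circle E ends W" "N = (C - W) \<union> (W - C)" "N \<inter> C = {}" "N \<noteq> {}"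
  shows False
proof -
  have "C \<subseteq> W" using assms(3,4) by auto
  then have "C = W" using subcircle assms(1,2) by blast
  then show False using assms(3,5) by auto
qed

end

theorem mainTheorem5:
  fixes V :: "'v set" and E :: "'e set" and ends :: "'e \<Rightarrow> 'v set"
    and \<sigma> :: "'e \<Rightarrow> sgn" and e :: 'e and C :: "'e set"
  assumes "graph V E ends"
    and "is_block V E ends"
    and "card E \<noteq> 1"
    and "\<not> circle E ends E"
    and "pos_battery E ends \<sigma> e C"
  shows "\<forall>D\<in>bridges V E ends C. balanced E ends \<sigma> D"
proof -
  have finE: "finite E" and eV: "\<forall>f\<in>E. ends f \<subseteq> V \<and> (card (ends f) = 1 \<or> card (ends f) = 2)"
    using assms(1) unfolding graph_def by auto
  have conn: "connected_on ends V E" and nocut: "\<And>v. \<not> cutpoint E ends v"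
    using assms(2) unfolding is_block_def by auto
  have vE: "verts ends E \<subseteq> V" using eV unfolding verts_def by auto
  have ne: "\<forall>f\<in>E. ends f \<noteq> {}" using eV by fastforce
  have two: "\<And>f. f \<in> E \<Longrightarrow> card (ends f) = 2"
  proof (rule ccontr)
    fix f assume f: "f \<in> E" "card (ends f) \<noteq> 2"
    then have "card (ends f) = 1" using eV by auto
    then obtain v where v: "ends f = {v}" by (rule card_1_singletonE)
    have "E - {f} \<noteq> {}"
    proof
      assume "E - {f} = {}"
      then have "E = {f}" using f by auto
      then show False using assms(3) by simp
    qed
    moreover have "{f} \<union> (E - {f}) = E" using f by auto
    ultimately have "verts ends {f} \<inter> verts ends (E - {f}) \<noteq> {}"
      using conn_split[OF conn vE ne, of "{f}" "E - {f}"] by auto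
    moreover have "verts ends {f} = {v}" using v unfolding verts_def by simp
    ultimately have "verts ends {f} \<inter> verts ends (E - {f}) = {v}" by auto
    then have "cutpoint E ends v" unfolding cutpoint_def
      using \<open>E - {f} \<noteq> {}\<close> \<open>{f} \<union> (E - {f}) = E\<close> by (intro exI[of _ "{f}"] exI[of _ "E - {f}"]) auto
    then show False using nocut by blast
  qed
  interpret lg E ends using finE two by unfold_locales auto
  have C: "circle E ends C" and eC: "e \<in> C" and posC: "positive \<sigma> C"
    and uniq: "\<And>C'. circle E ends C' \<Longrightarrow> e \<in> C' \<Longrightarrow> positive \<sigma> C' \<Longrightarrow> C' = C"
    using assms(5) unfolding pos_battery_def by auto
  show ?thesis
  proof (intro ballI, unfold balanced_def, intro allI impI)
    fix D N assume D: "D \<in> bridges V E ends C" and N: "circle E ends N \<and> N \<subseteq> D"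
    have NE: "N \<subseteq> E" and Nne: "N \<noteq> {}" using N unfolding circle_def by auto
    have NC: "N \<inter> C = {}"
    proof (cases "D \<in> {{f} | f. chord E ends C f}")
      case True
      then obtain f where Df: "D = {f}" and ch: "chord E ends C f" by auto
      have Nf: "N = {f}" using N Nne Df by auto
      have fE: "f \<in> E" using ch unfolding chord_def by auto
      obtain v where v: "v \<in> ends f" using ne fE by auto
      have "v \<in> verts ends N" using Nf v unfolding verts_def by auto
      then have "deg ends N v = 2" using N unfolding circle_def by auto
      moreover have "deg ends N v = dg N v" using deg_eq NE by simp
      moreover have "{g\<in>N. v \<in> ends g} = {f}" using Nf v by auto
      ultimately show ?thesis unfolding dg_def by simp
    next
      case False
      then obtain X where X: "X \<in> comps_minus V E ends C" and DX: "D = bridge_of_comp E ends C X"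
        using D unfolding bridges_def by auto
      have XV: "X \<subseteq> V - verts ends C" using X unfolding comps_minus_def Let_def by auto
      have "\<And>g. g \<in> D \<Longrightarrow> g \<notin> C"
      proof
        fix g assume g: "g \<in> D" "g \<in> C"
        have gE: "g \<in> E" using g DX unfolding bridge_of_comp_def by auto
        have "ends g \<inter> X \<noteq> {}" using g(1) DX ne gE unfolding bridge_of_comp_def by auto
        moreover have "ends g \<subseteq> verts ends C" using g(2) unfolding verts_def by auto
        ultimately show False using XV by auto
      qed
      then show ?thesis using N by auto
    qed
    show "positive \<sigma> N"
    proof (rule ccontr)
      assume npos: "\<not> positive \<sigma> N"
      obtain f where f: "f \<in> N" using Nne by auto
      obtain Z where Z: "circle E ends Z" "e \<in> Z" "f \<in> Z"
        using all_on_circle[OF conn vE nocut C eC] f NE by blast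
      have eN: "e \<notin> N" using NC eC by auto
      have "Z \<inter> N \<noteq> {}" using Z f by auto
      then obtain W1 W2 where W: "circle E ends W1" "circle E ends W2" "e \<in> W1" "e \<in> W2"
        "(W1 - W2) \<union> (W2 - W1) = N"
        using theta[OF conjunct1[OF N] eN Z(1) Z(2)] by blast
      have "even (card {f\<in>(W1-W2)\<union>(W2-W1). \<sigma> f = Minus}) \<longleftrightarrow>
          (even (card {f\<in>W1. \<sigma> f = Minus}) \<longleftrightarrow> even (card {f\<in>W2. \<sigma> f = Minus}))"
        using symdiff_parity[OF circle_fin[OF W(1)] circle_fin[OF W(2)], of "\<lambda>f. \<sigma> f = Minus"] .
      then have "positive \<sigma> W1 \<or> positive \<sigma> W2" using npos W(5) unfolding positive_def by auto
      then show False
      proof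
        assume "positive \<sigma> W1"
        then have "W1 = C" using uniq W by auto
        then show False using close_lem[OF C W(2) _ NC Nne] W(5) by auto
      next
        assume "positive \<sigma> W2"
        then have "W2 = C" using uniq W by auto
        then show False using close_lem[OF C W(1) _ NC Nne] W(5) by auto
      qed
    qed
  qed
qed

end
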